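(* Let $\mathcal{Q}\subset\mathcal{E}$ be a smooth embedded submanifold with projection function $\Pi$ for $T\mathcal{Q}$, and embed $T^*\mathcal{Q}=\{(q,p): q\in\mathcal{Q},\ \Pi(q)^{T}p=p\}\subset\mathcal{E}^2$. Fix $(q,p)\in T^*\mathcal{Q}$. For $(h_q,h_p)\in\mathcal{E}^2$ set $$e_q=\Pi(q)h_p,\qquad e_p=\Pi'(q;e_q)^{T}p-\Pi(q)^{T}\big\{h_q+\{X\mapsto\Pi'(q;X)^{T}p\}^{T}h_p\big\}.$$ Then $(e_q,e_p)\in T_{(q,p)}T^*\mathcal{Q}$ and for all $(\xi_q,\xi_p)\in T_{(q,p)}T^*\mathcal{Q}$, $$h_q\cdot\xi_q+h_p\cdot\xi_p=e_q\cdot\xi_p-e_p\cdot\xi_q=\Omega\big((e_q,e_p),(\xi_q,\xi_p)\big).$$ Restricted to $T^*_{(q,p)}T^*\mathcal{Q}=\{(s_q,s_p):\Pi(q)^{T}s_q=s_q,\ \Pi(q)s_p=s_p\}$, the map $(h_q,h_p)\mapsto(e_q,e_p)$ is a bijection onto $T_{(q,p)}T^*\mathcal{Q}$ with inverse $(e_q,e_p)\mapsto(-\Pi(q)^{T}e_p,\ e_q)$; consequently $\Omega$ is nondegenerate on $T_{(q,p)}T^*\mathcal{Q}$ and $(e_q,e_p)$ is the unique element of $T_{(q,p)}T^*\mathcal{Q}$ satisfying the displayed identity. Hence, for a smooth function $H$ on $T^*\mathcal{Q}$ extended smoothly to a neighborhood in $\mathcal{E}^2$ with partial gradients $(H_q,H_p)$,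 the unique vector field $X_H$ on $T^*\mathcal{Q}$ with $\Omega(X_H,Y)=D_YH$ for all vector fields $Y$ on $T^*\mathcal{Q}$ is $$X_H(q,p)=\Big(\Pi(q)H_p,\ \ \Pi'(q;\Pi(q)H_p)^{T}p-\Pi(q)^{T}\big\{H_q+\{X\mapsto\Pi'(q;X)^{T}p\}^{T}H_p\big\}\Big).$$
   Context: $\mathcal{E}$ is a finite-dimensional real inner product space (inner product $a\cdot b$, adjoint $A^{T}$). A projection function for $T\mathcal{Q}$ is a smooth map $\Pi:\mathcal{Q}\to\mathrm{Lin}(\mathcal{E},\mathcal{E})$ with $\Pi(q)^2=\Pi(q)$ and $\mathrm{Im}\,\Pi(q)=T_q\mathcal{Q}$; $\Pi'(q;\xi)$ is its directional derivative. The tangent space of the embedded cotangent bundle is $T_{(q,p)}T^*\mathcal{Q}=\{(\Delta_q,\Delta_p)\in T_q\mathcal{Q}\times\mathcal{E}:\ \Delta_p=\Pi(q)^{T}\Delta_p+\Pi'(q;\Delta_q)^{T}p\}$. The Poincaré 2-form is $\Omega((a,b),(c,d))=a\cdot d-b\cdot c$ (restricted to $T T^*\mathcal{Q}$). Index-raising notation: $\{X\mapsto\Pi'(q;X)^{T}p\}^{T}h$ denotes the unique $\Phi\in T_q\mathcal{Q}$ with $\Delta\cdot\Phi=h\cdot\Pi'(q;\Delta)^{T}p$ for all $\Delta\in T_q\mathcal{Q}$. *)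

theory Defs
  imports "HOL-Analysis.Analysis"
begin

text \<open>For finite-dimensional domains this is exactly C-infinity on open U.\<close>
coinductive smooth_on :: "'a::real_normed_vector set \<Rightarrow> ('a \<Rightarrow> 'b::real_normed_vector) \<Rightarrow> bool"
  for U where
  "(\<forall>x\<in>U. g differentiable (at x)) \<Longrightarrow>
   (\<forall>v. smooth_on U (\<lambda>x. frechet_derivative g (at x) v)) \<Longrightarrow> smooth_on U g"

definition embedded_submanifold :: "'a::euclidean_space set \<Rightarrow> bool" where
  "embedded_submanifold Q \<longleftrightarrow>
     (\<forall>q\<in>Q. \<exists>U V (\<phi>::'a \<Rightarrow> 'a) \<psi> L.
        open U \<and> q \<in> U \<and> open V \<and> subspace L \<and>
        smooth_on U \<phi> \<and> smooth_on V \<psi> \<and> \<phi> ` U = V \<and>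
        (\<forall>x\<in>U. \<psi> (\<phi> x) = x) \<and> \<phi> ` (Q \<inter> U) = V \<inter> L)"

definition tangent_space :: "'a::euclidean_space set \<Rightarrow> 'a \<Rightarrow> 'a set" where
  "tangent_space Q q = {v. \<exists>(\<gamma>::real \<Rightarrow> 'a) \<epsilon>. \<epsilon> > 0 \<and> smooth_on (ball 0 \<epsilon>) \<gamma> \<and>
       \<gamma> ` ball 0 \<epsilon> \<subseteq> Q \<and> \<gamma> 0 = q \<and> (\<gamma> has_vector_derivative v) (at 0)}"

definition transp :: "('a::euclidean_space \<Rightarrow>\<^sub>L 'a) \<Rightarrow> 'a \<Rightarrow> 'a" where
  "transp A = adjoint (blinfun_apply A)"

text \<open>A projection function for TQ: smooth (given as a smooth map on an open
  neighbourhood of Q, i.e. a smooth extension of a smooth map on Q), with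
  Pi(q) idempotent and Im Pi(q) = T_q Q for q in Q.\<close>
definition projection_function :: "'a::euclidean_space set \<Rightarrow> ('a \<Rightarrow> ('a \<Rightarrow>\<^sub>L 'a)) \<Rightarrow> bool" where
  "projection_function Q Pr \<longleftrightarrow>
     (\<exists>U. open U \<and> Q \<subseteq> U \<and> smooth_on U Pr) \<and>
     (\<forall>q\<in>Q. Pr q o\<^sub>L Pr q = Pr q \<and> range (blinfun_apply (Pr q)) = tangent_space Q q)"

definition dPi :: "('a::euclidean_space \<Rightarrow> ('a \<Rightarrow>\<^sub>L 'a)) \<Rightarrow> 'a \<Rightarrow> 'a \<Rightarrow> ('a \<Rightarrow>\<^sub>L 'a)" where
  "dPi Pr q \<xi> = frechet_derivative Pr (at q) \<xi>"

text \<open>Index raising: {X |-> Pi'(q;X)^T p}^T h is the unique Phi in T_q Q with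
  Delta . Phi = h . Pi'(q;Delta)^T p for all Delta in T_q Q.\<close>
definition raise :: "'a::euclidean_space set \<Rightarrow> ('a \<Rightarrow> ('a \<Rightarrow>\<^sub>L 'a)) \<Rightarrow> 'a \<Rightarrow> 'a \<Rightarrow> 'a \<Rightarrow> 'a" where
  "raise Q Pr q p h = (THE \<Phi>. \<Phi> \<in> tangent_space Q q \<and>
      (\<forall>\<Delta>\<in>tangent_space Q q. \<Delta> \<bullet> \<Phi> = h \<bullet> transp (dPi Pr q \<Delta>) p))"

definition cotangent_bundle :: "'a::euclidean_space set \<Rightarrow> ('a \<Rightarrow> ('a \<Rightarrow>\<^sub>L 'a)) \<Rightarrow> ('a \<times> 'a) set" where
  "cotangent_bundle Q Pr = {(q, p). q \<in> Q \<and> transp (Pr q) p = p}"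

definition TTstar :: "'a::euclidean_space set \<Rightarrow> ('a \<Rightarrow> ('a \<Rightarrow>\<^sub>L 'a)) \<Rightarrow> 'a \<Rightarrow> 'a \<Rightarrow> ('a \<times> 'a) set" where
  "TTstar Q Pr q p = {(dq, dp). dq \<in> tangent_space Q q \<and>
      dp = transp (Pr q) dp + transp (dPi Pr q dq) p}"

definition TstarTstar :: "('a::euclidean_space \<Rightarrow> ('a \<Rightarrow>\<^sub>L 'a)) \<Rightarrow> 'a \<Rightarrow> ('a \<times> 'a) set" where
  "TstarTstar Pr q = {(sq, sp). transp (Pr q) sq = sq \<and> Pr q sp = sp}"

definition Omega :: "('a::real_inner \<times> 'a) \<Rightarrow> ('a \<times> 'a) \<Rightarrow> real" where
  "Omega v w = fst v \<bullet> snd w - snd v \<bullet> fst w"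

definition emap :: "'a::euclidean_space set \<Rightarrow> ('a \<Rightarrow> ('a \<Rightarrow>\<^sub>L 'a)) \<Rightarrow> 'a \<Rightarrow> 'a \<Rightarrow> ('a \<times> 'a) \<Rightarrow> ('a \<times> 'a)" where
  "emap Q Pr q p h =
     (let eq = Pr q (snd h)
      in (eq, transp (dPi Pr q eq) p - transp (Pr q) (fst h + raise Q Pr q p (snd h))))"

definition grad_q :: "('a::euclidean_space \<times> 'a \<Rightarrow> real) \<Rightarrow> 'a \<times> 'a \<Rightarrow> 'a" where
  "grad_q H z = (THE g. \<forall>v. frechet_derivative H (at z) (v, 0) = g \<bullet> v)"

definition grad_p :: "('a::euclidean_space \<times> 'a \<Rightarrow> real) \<Rightarrow> 'a \<times> 'a \<Rightarrow> 'a" where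
  "grad_p H z = (THE g. \<forall>v. frechet_derivative H (at z) (0, v) = g \<bullet> v)"

end

theory Submission
  imports Defs
begin


lemma transp_inner: "x \<bullet> transp A y = A x \<bullet> y"
  unfolding transp_def
  by (rule adjoint_works) (simp add: bounded_linear.linear blinfun.bounded_linear_right)

lemma transp_inner2: "transp A y \<bullet> x = y \<bullet> A x"
  by (simp add: inner_commute transp_inner)

lemma linear_transp: "linear (transp A)"
  unfolding transp_def
  by (rule adjoint_linear) (simp add: bounded_linear.linear blinfun.bounded_linear_right)

lemma vec_eqI: "(\<And>x. x \<bullet> u = x \<bullet> v) \<Longrightarrow> (u::'a::real_inner) = v"
  using vector_eq_ldot by blast

lemma smooth_diff: "smooth_on U g \<Longrightarrow> x \<in> U \<Longrightarrow> g differentiable (at x)"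
  by (erule smooth_on.cases) auto

lemma key_deriv:
  assumes proj: "projection_function Q Pr" and qQ: "q \<in> Q" and a: "a \<in> tangent_space Q q"
  shows "(Pr q o\<^sub>L dPi Pr q a) + (dPi Pr q a o\<^sub>L Pr q) = dPi Pr q a"
proof -
  obtain U where U: "open U" "Q \<subseteq> U" "smooth_on U Pr" using proj unfolding projection_function_def by blast
  define DP where "DP = frechet_derivative Pr (at q)"
  have hP: "(Pr has_derivative DP) (at q)"
    unfolding DP_def using smooth_diff[OF U(3)] U(2) qQ frechet_derivative_works by blast
  obtain \<gamma> :: "real \<Rightarrow> 'a" and \<epsilon> where g: "\<epsilon> > 0" "\<gamma> ` ball 0 \<epsilon> \<subseteq> Q" "\<gamma> 0 = q"
     "(\<gamma> has_vector_derivative a) (at 0)"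
    using a unfolding tangent_space_def by blast
  have hg: "(\<gamma> has_derivative (\<lambda>t. t *\<^sub>R a)) (at 0)"
    using g(4) by (simp add: has_vector_derivative_def)
  have hc: "((Pr \<circ> \<gamma>) has_derivative DP \<circ> (\<lambda>t. t *\<^sub>R a)) (at 0)"
    by (rule diff_chain_at[OF hg]) (simp add: g(3) hP)
  note hprod = bounded_bilinear.FDERIV[OF bounded_bilinear_blinfun_compose hc hc]
  have eqb: "\<And>t. t \<in> ball 0 \<epsilon> \<Longrightarrow> (Pr \<circ> \<gamma>) t o\<^sub>L (Pr \<circ> \<gamma>) t = (Pr \<circ> \<gamma>) t"
  proof -
    fix t :: real assume "t \<in> ball 0 \<epsilon>"
    then have "\<gamma> t \<in> Q" using g(2) by blast
    then show "(Pr \<circ> \<gamma>) t o\<^sub>L (Pr \<circ> \<gamma>) t = (Pr \<circ> \<gamma>) t"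
      using proj unfolding projection_function_def by auto
  qed
  have hprod2: "((\<lambda>t. Pr (\<gamma> t)) has_derivative
      (\<lambda>h. (Pr q o\<^sub>L DP (h *\<^sub>R a)) + (DP (h *\<^sub>R a) o\<^sub>L Pr q))) (at 0)"
    apply (rule has_derivative_transform_within_open[where f="\<lambda>t. Pr (\<gamma> t) o\<^sub>L Pr (\<gamma> t)" and s="ball 0 \<epsilon>"])
    using hprod g eqb by (auto simp: o_def)
  have hc2: "((\<lambda>t. Pr (\<gamma> t)) has_derivative (\<lambda>h. DP (h *\<^sub>R a))) (at 0)"
    using hc by (simp add: o_def)
  have "(\<lambda>h. (Pr q o\<^sub>L DP (h *\<^sub>R a)) + (DP (h *\<^sub>R a) o\<^sub>L Pr q)) = (\<lambda>h. DP (h *\<^sub>R a))"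
    using has_derivative_unique[OF hprod2 hc2] .
  from fun_cong[OF this, of 1] show ?thesis
    by (simp add: g(3) dPi_def DP_def)
qed


locale pt =
  fixes Q :: "'a::euclidean_space set" and Pr :: "'a \<Rightarrow> ('a \<Rightarrow>\<^sub>L 'a)" and q p :: 'a
  assumes proj: "projection_function Q Pr" and qQ: "q \<in> Q" and pP: "transp (Pr q) p = p"
begin

abbreviation "P \<equiv> Pr q"
abbreviation "T \<equiv> tangent_space Q q"
abbreviation "D \<equiv> dPi Pr q"

lemma P_idem: "P (P x) = P x"
proof -
  have "P o\<^sub>L P = P" using proj qQ unfolding projection_function_def by blast
  then show ?thesis by (metis blinfun_apply_blinfun_compose)
qed

lemma T_range: "T = range (blinfun_apply P)"
  using proj qQ unfolding projection_function_def by blast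

lemma T_iff: "x \<in> T \<longleftrightarrow> P x = x"
proof
  assume "x \<in> T" then obtain y where "x = P y" unfolding T_range by blast
  then show "P x = x" by (simp add: P_idem)
next
  assume "P x = x" then show "x \<in> T" unfolding T_range by (metis rangeI)
qed

lemma T_sub: "subspace T"
  unfolding T_range
  using linear_subspace_image[of "blinfun_apply P" UNIV]
  by (simp add: bounded_linear.linear blinfun.bounded_linear_right)

lemma D_lin: "bounded_linear D"
proof -
  obtain U where U: "open U" "Q \<subseteq> U" "smooth_on U Pr" using proj unfolding projection_function_def by blast
  have "(Pr has_derivative frechet_derivative Pr (at q)) (at q)"
    using smooth_diff[OF U(3)] U(2) qQ frechet_derivative_works by blast
  then have "bounded_linear (frechet_derivative Pr (at q))" by (rule has_derivative_bounded_linear)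
  moreover have "D = frechet_derivative Pr (at q)" by (simp add: dPi_def fun_eq_iff)
  ultimately show ?thesis by simp
qed

lemma D_diff: "D (a - b) = D a - D b"
  using D_lin by (simp add: linear_simps)
lemma D_zero: "D 0 = 0"
  using D_lin by (simp add: linear_simps)

lemma PDP: assumes "a \<in> T" shows "P (D a (P x)) = 0"
proof -
  have k: "(P o\<^sub>L D a) + (D a o\<^sub>L P) = D a" using key_deriv[OF proj qQ assms] .
  have "P (D a (P x)) + D a (P (P x)) = D a (P x)"
    using arg_cong[OF k, of "\<lambda>A. blinfun_apply A (P x)"] by (simp add: blinfun.add_left)
  then show ?thesis by (simp add: P_idem)
qed

lemma K: assumes "a \<in> T" "b \<in> T" shows "p \<bullet> D a b = 0"
proof -
  have "p \<bullet> D a b = transp P p \<bullet> D a (P b)" using pP assms(2) T_iff by simp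
  also have "\<dots> = p \<bullet> P (D a (P b))" by (rule transp_inner2)
  also have "\<dots> = 0" using PDP[OF assms(1)] by simp
  finally show ?thesis .
qed

lemma raise_ex: "\<exists>\<Phi>. \<Phi> \<in> T \<and> (\<forall>\<Delta>\<in>T. \<Delta> \<bullet> \<Phi> = h \<bullet> transp (D \<Delta>) p)"
proof -
  define f where "f = (\<lambda>\<Delta>. D \<Delta> h \<bullet> p)"
  have lf: "linear f"
    unfolding f_def
    by (intro linearI) (simp_all add: linear_add[OF bounded_linear.linear[OF D_lin]] linear_scale[OF bounded_linear.linear[OF D_lin]]
        blinfun.add_left blinfun.scaleR_left inner_add_left)
  define g where "g = adjoint f 1"
  have gf: "\<Delta> \<bullet> g = f \<Delta>" for \<Delta>
    unfolding g_def using adjoint_works[OF lf, of \<Delta> 1] by simp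
  obtain y z where yz: "y \<in> span T" "\<And>w. w \<in> span T \<Longrightarrow> orthogonal z w" "g = y + z"
    using orthogonal_subspace_decomp_exists by blast
  have yT: "y \<in> T" using yz(1) span_eq_iff T_sub by blast
  show ?thesis
  proof (intro exI conjI ballI)
    show "y \<in> T" by (rule yT)
    fix \<Delta> assume "\<Delta> \<in> T"
    then have "z \<bullet> \<Delta> = 0" using yz(2) span_base orthogonal_def by blast
    then have "\<Delta> \<bullet> y = \<Delta> \<bullet> g" using yz(3) by (simp add: inner_add_right inner_commute)
    also have "\<dots> = h \<bullet> transp (D \<Delta>) p" using gf by (simp add: f_def transp_inner)
    finally show "\<Delta> \<bullet> y = h \<bullet> transp (D \<Delta>) p" .
  qed
qed

lemma raise_char: "raise Q Pr q p h \<in> T \<and> (\<forall>\<Delta>\<in>T. \<Delta> \<bullet> raise Q Pr q p h = h \<bullet> transp (D \<Delta>) p)"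
  unfolding raise_def
proof (rule theI')
  show "\<exists>!\<Phi>. \<Phi> \<in> T \<and> (\<forall>\<Delta>\<in>T. \<Delta> \<bullet> \<Phi> = h \<bullet> transp (D \<Delta>) p)"
  proof (rule ex_ex1I[OF raise_ex])
    fix x y assume x: "x \<in> T \<and> (\<forall>\<Delta>\<in>T. \<Delta> \<bullet> x = h \<bullet> transp (D \<Delta>) p)"
      and y: "y \<in> T \<and> (\<forall>\<Delta>\<in>T. \<Delta> \<bullet> y = h \<bullet> transp (D \<Delta>) p)"
    have d: "x - y \<in> T" using x y T_sub subspace_diff by blast
    have "(x - y) \<bullet> (x - y) = (x - y) \<bullet> x - (x - y) \<bullet> y" by (simp add: inner_diff_right)
    also have "\<dots> = 0" using x y d by simp
    finally show "x = y" by simp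
  qed
qed

lemma raise_zero: assumes "a \<in> T" shows "raise Q Pr q p a = 0"
proof -
  let ?F = "raise Q Pr q p a"
  have F: "?F \<in> T" using raise_char by blast
  have "?F \<bullet> ?F = a \<bullet> transp (D ?F) p" using raise_char F by blast
  also have "\<dots> = p \<bullet> D ?F a" by (simp add: transp_inner inner_commute)
  also have "\<dots> = 0" using K[OF F assms] .
  finally show ?thesis by simp
qed

lemma emap_fst: "fst (emap Q Pr q p h) = P (snd h)"
  by (simp add: emap_def Let_def)
lemma emap_snd: "snd (emap Q Pr q p h) = transp (D (P (snd h))) p - transp P (fst h + raise Q Pr q p (snd h))"
  by (simp add: emap_def Let_def)

lemma TT_iff: "\<xi> \<in> TTstar Q Pr q p \<longleftrightarrow> fst \<xi> \<in> T \<and> snd \<xi> = transp P (snd \<xi>) + transp (D (fst \<xi>)) p"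
  by (cases \<xi>) (simp add: TTstar_def)

lemma emap_in: "emap Q Pr q p h \<in> TTstar Q Pr q p"
proof -
  let ?u = "P (snd h)" and ?R = "fst h + raise Q Pr q p (snd h)"
  have u: "?u \<in> T" using T_iff P_idem by simp
  have "snd (emap Q Pr q p h) = transp P (snd (emap Q Pr q p h)) + transp (D ?u) p"
  proof (rule vec_eqI)
    fix x
    have "x \<bullet> transp P (snd (emap Q Pr q p h)) = D ?u (P x) \<bullet> p - P (P x) \<bullet> ?R"
      by (simp add: transp_inner emap_snd inner_diff_right)
    also have "\<dots> = - (P x \<bullet> ?R)"
    proof -
      have "D ?u (P x) \<bullet> p = 0" using K[OF u, of "P x"] T_iff P_idem by (simp add: inner_commute)
      then show ?thesis by (simp add: P_idem)
    qed
    finally have 1: "x \<bullet> transp P (snd (emap Q Pr q p h)) = - (P x \<bullet> ?R)" .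
    show "x \<bullet> snd (emap Q Pr q p h) = x \<bullet> (transp P (snd (emap Q Pr q p h)) + transp (D ?u) p)"
    proof -
      have 2: "x \<bullet> snd (emap Q Pr q p h) = D ?u x \<bullet> p - P x \<bullet> ?R"
        by (simp add: emap_snd inner_diff_right transp_inner)
      have 3: "x \<bullet> transp (D ?u) p = D ?u x \<bullet> p" by (rule transp_inner)
      show ?thesis unfolding inner_add_right 1 2 3 by simp
    qed
  qed
  then show ?thesis using u by (simp add: TT_iff emap_fst)
qed

lemma emap_ident:
  assumes xi: "\<xi> \<in> TTstar Q Pr q p"
  shows "fst h \<bullet> fst \<xi> + snd h \<bullet> snd \<xi>
       = fst (emap Q Pr q p h) \<bullet> snd \<xi> - snd (emap Q Pr q p h) \<bullet> fst \<xi>"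
proof -
  obtain a b where ab: "\<xi> = (a, b)" by (cases \<xi>)
  have a: "a \<in> T" and b: "b = transp P b + transp (D a) p" using xi ab TT_iff by auto
  let ?u = "P (snd h)" and ?F = "raise Q Pr q p (snd h)"
  have u: "?u \<in> T" using T_iff P_idem by simp
  have Pa: "P a = a" using a T_iff by simp
  have 1: "?u \<bullet> b = snd h \<bullet> b - D a (snd h) \<bullet> p"
  proof -
    have "?u \<bullet> b = snd h \<bullet> transp P b" by (simp add: transp_inner)
    also have "transp P b = b - transp (D a) p" using b by (simp add: algebra_simps)
    finally show ?thesis by (simp add: inner_diff_right transp_inner inner_commute)
  qed
  have 2: "a \<bullet> ?F = snd h \<bullet> transp (D a) p" using raise_char a by blast
  have 3: "a \<bullet> snd (emap Q Pr q p h) = D ?u a \<bullet> p - a \<bullet> fst h - a \<bullet> ?F"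
    by (simp add: emap_snd inner_diff_right transp_inner Pa inner_add_right)
  have 4: "D ?u a \<bullet> p = 0" using K[OF u a] by (simp add: inner_commute)
  have 5: "snd (emap Q Pr q p h) \<bullet> a = a \<bullet> snd (emap Q Pr q p h)" by (rule inner_commute)
  have 6: "fst h \<bullet> a = a \<bullet> fst h" by (rule inner_commute)
  have 7: "D a (snd h) \<bullet> p = snd h \<bullet> transp (D a) p" by (simp add: transp_inner)
  show ?thesis using 1 2 3 4 5 6 7 ab
    by (simp add: emap_fst)
qed

lemma Omega_eq: "Omega v w = fst v \<bullet> snd w - snd v \<bullet> fst w"
  by (simp add: Omega_def)

lemma inv_in: assumes "e \<in> TTstar Q Pr q p"
  shows "(- transp P (snd e), fst e) \<in> TstarTstar Pr q"
    and "emap Q Pr q p (- transp P (snd e), fst e) = e"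
proof -
  have a: "fst e \<in> T" and b: "snd e = transp P (snd e) + transp (D (fst e)) p" using assms TT_iff by auto
  have Pa: "P (fst e) = fst e" using a T_iff by simp
  have tt: "transp P (transp P x) = transp P x" for x
    by (rule vec_eqI) (simp add: transp_inner P_idem)
  show "(- transp P (snd e), fst e) \<in> TstarTstar Pr q"
    by (simp add: TstarTstar_def Pa tt linear_neg[OF linear_transp])
  have "snd (emap Q Pr q p (- transp P (snd e), fst e)) = snd e"
    using b by (simp add: emap_snd Pa raise_zero[OF a] tt linear_neg[OF linear_transp] algebra_simps)
  then show "emap Q Pr q p (- transp P (snd e), fst e) = e"
    by (metis Pa emap_fst fst_conv prod.collapse snd_conv)
qed

lemma inv_left: assumes "h \<in> TstarTstar Pr q"
  shows "(- transp P (snd (emap Q Pr q p h)), fst (emap Q Pr q p h)) = h"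
proof -
  obtain a b where ab: "h = (a, b)" by (cases h)
  have a: "transp P a = a" and b: "P b = b" using assms ab by (auto simp: TstarTstar_def)
  have bT: "b \<in> T" using b T_iff by simp
  have tt: "transp P (transp P x) = transp P x" for x
    by (rule vec_eqI) (simp add: transp_inner P_idem)
  have z: "transp P (transp (D b) p) = 0"
    by (rule vec_eqI) (simp add: transp_inner K[OF bT] inner_commute T_iff P_idem)
  show ?thesis using ab a b
    by (simp add: emap_fst emap_snd raise_zero[OF bT] z linear_diff[OF linear_transp])
qed

lemma transp_zero: "transp 0 y = 0"
  by (rule vec_eqI) (simp add: transp_inner)

lemma nondeg: assumes v: "v \<in> TTstar Q Pr q p" and w: "\<forall>w\<in>TTstar Q Pr q p. Omega v w = 0"
  shows "v = 0"
proof -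
  have a: "fst v \<in> T" and b: "snd v = transp P (snd v) + transp (D (fst v)) p" using v TT_iff by auto
  have kk: "fst k \<bullet> fst v + snd k \<bullet> snd v = 0" if k: "k \<in> TstarTstar Pr q" for k
  proof -
    have "Omega (emap Q Pr q p k) v = 0"
    proof -
      have "Omega v (emap Q Pr q p k) = 0" using w emap_in by blast
      then show ?thesis unfolding Omega_eq by (simp add: inner_commute)
    qed
    then show ?thesis using emap_ident[OF v, of k] unfolding Omega_eq by simp
  qed
  have tt: "transp P (transp P x) = transp P x" for x
    by (rule vec_eqI) (simp add: transp_inner P_idem)
  have tz: "transp P 0 = 0" by (rule linear_0[OF linear_transp])
  have "(transp P (fst v), 0) \<in> TstarTstar Pr q" unfolding TstarTstar_def
    using tt blinfun.zero_right[of P] by simp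
  from kk[OF this] have "transp P (fst v) \<bullet> fst v = 0" by simp
  then have "fst v \<bullet> P (fst v) = 0" by (simp add: transp_inner2)
  then have q0: "fst v = 0" using a T_iff by simp
  have "(0, P (snd v)) \<in> TstarTstar Pr q" unfolding TstarTstar_def using tz P_idem by simp
  from kk[OF this] have "P (snd v) \<bullet> snd v = 0" by simp
  then have "snd v \<bullet> transp P (snd v) = 0" by (simp add: transp_inner)
  moreover have "transp P (snd v) = snd v"
  proof -
    have e: "transp (D (fst v)) p = 0" using q0 D_zero transp_zero by simp
    show ?thesis using b e by (metis add.right_neutral)
  qed
  ultimately have "snd v = 0" by simp
  with q0 show ?thesis by (simp add: prod_eq_iff)
qed

lemma TT_diff: assumes "v \<in> TTstar Q Pr q p" "w \<in> TTstar Q Pr q p" shows "v - w \<in> TTstar Q Pr q p"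
proof -
  have "transp (D (fst v - fst w)) p = transp (D (fst v)) p - transp (D (fst w)) p"
    by (rule vec_eqI) (simp add: transp_inner D_diff blinfun.diff_left inner_diff_left inner_diff_right)
  moreover have "fst v - fst w \<in> T" using assms T_sub subspace_diff TT_iff by blast
  moreover have "snd v = transp P (snd v) + transp (D (fst v)) p" "snd w = transp P (snd w) + transp (D (fst w)) p"
    using assms TT_iff by auto
  ultimately show ?thesis
    by (simp add: TT_iff linear_diff[OF linear_transp]) (metis (no_types, lifting) add_diff_add)
qed

lemma uniq: assumes v: "v \<in> TTstar Q Pr q p"
  and H: "\<forall>\<xi>\<in>TTstar Q Pr q p. fst h \<bullet> fst \<xi> + snd h \<bullet> snd \<xi> = Omega v \<xi>"
  shows "v = emap Q Pr q p h"
proof -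
  have "v - emap Q Pr q p h = 0"
  proof (rule nondeg[OF TT_diff[OF v emap_in]], intro ballI)
    fix w assume w: "w \<in> TTstar Q Pr q p"
    have "Omega (v - emap Q Pr q p h) w = Omega v w - Omega (emap Q Pr q p h) w"
      by (simp add: Omega_eq inner_diff_left)
    then show "Omega (v - emap Q Pr q p h) w = 0" using H w emap_ident[OF w, of h] by (simp add: Omega_eq)
  qed
  then show ?thesis by simp
qed

end

lemma grad_q_char:
  fixes H :: "'a::euclidean_space \<times> 'a \<Rightarrow> real"
  assumes "H differentiable (at z)"
  shows "frechet_derivative H (at z) (v, 0) = grad_q H z \<bullet> v"
proof -
  let ?L = "frechet_derivative H (at z)"
  have bl: "bounded_linear ?L"
    using assms frechet_derivative_works has_derivative_bounded_linear by blast
  define f where "f = (\<lambda>v::'a. ?L (v, 0))"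
  have lf: "linear f" unfolding f_def
    apply (intro linearI)
    subgoal for a b using linear_add[OF bounded_linear.linear[OF bl], of "(a,0)" "(b,0)"] by simp
    subgoal for r b using linear_scale[OF bounded_linear.linear[OF bl], of r "(b,0)"] by simp
    done
  have ex: "\<forall>v. ?L (v, 0) = adjoint f 1 \<bullet> v"
    using adjoint_works[OF lf] by (simp add: f_def inner_commute)
  have "\<forall>v. ?L (v, 0) = grad_q H z \<bullet> v"
    unfolding grad_q_def
  proof (rule theI[where a="adjoint f 1"])
    show "\<forall>v. ?L (v, 0) = adjoint f 1 \<bullet> v" by (rule ex)
  next
    fix g assume "\<forall>v. ?L (v, 0) = g \<bullet> v"
    then have "\<forall>v. g \<bullet> v = adjoint f 1 \<bullet> v" using ex by simp
    then show "g = adjoint f 1" using vector_eq_rdot by blast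
  qed
  then show ?thesis by blast
qed

lemma grad_p_char:
  fixes H :: "'a::euclidean_space \<times> 'a \<Rightarrow> real"
  assumes "H differentiable (at z)"
  shows "frechet_derivative H (at z) (0, v) = grad_p H z \<bullet> v"
proof -
  let ?L = "frechet_derivative H (at z)"
  have bl: "bounded_linear ?L"
    using assms frechet_derivative_works has_derivative_bounded_linear by blast
  define f where "f = (\<lambda>v::'a. ?L (0, v))"
  have lf: "linear f" unfolding f_def
    apply (intro linearI)
    subgoal for a b using linear_add[OF bounded_linear.linear[OF bl], of "(0,a)" "(0,b)"] by simp
    subgoal for r b using linear_scale[OF bounded_linear.linear[OF bl], of r "(0,b)"] by simp
    done
  have ex: "\<forall>v. ?L (0, v) = adjoint f 1 \<bullet> v"
    using adjoint_works[OF lf] by (simp add: f_def inner_commute)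
  have "\<forall>v. ?L (0, v) = grad_p H z \<bullet> v"
    unfolding grad_p_def
  proof (rule theI[where a="adjoint f 1"])
    show "\<forall>v. ?L (0, v) = adjoint f 1 \<bullet> v" by (rule ex)
  next
    fix g assume "\<forall>v. ?L (0, v) = g \<bullet> v"
    then have "\<forall>v. g \<bullet> v = adjoint f 1 \<bullet> v" using ex by simp
    then show "g = adjoint f 1" using vector_eq_rdot by blast
  qed
  then show ?thesis by blast
qed

lemma DH_split:
  fixes H :: "'a::euclidean_space \<times> 'a \<Rightarrow> real"
  assumes "H differentiable (at z)"
  shows "frechet_derivative H (at z) y = grad_q H z \<bullet> fst y + grad_p H z \<bullet> snd y"
proof -
  let ?L = "frechet_derivative H (at z)"
  have bl: "bounded_linear ?L"
    using assms frechet_derivative_works has_derivative_bounded_linear by blast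
  have "y = (fst y, 0) + (0, snd y)" by simp
  then have "?L y = ?L (fst y, 0) + ?L (0, snd y)"
    by (metis linear_add[OF bounded_linear.linear[OF bl]])
  then show ?thesis using grad_q_char[OF assms] grad_p_char[OF assms] by simp
qed

lemma pt_of: "projection_function Q Pr \<Longrightarrow> (q, p) \<in> cotangent_bundle Q Pr \<Longrightarrow> pt Q Pr q p"
  by (unfold_locales) (auto simp: cotangent_bundle_def)

theorem mainTheorem6:
  fixes Q :: "'a::euclidean_space set" and Pr :: "'a \<Rightarrow> ('a \<Rightarrow>\<^sub>L 'a)" and q p :: 'a
  assumes "embedded_submanifold Q"
    and "projection_function Q Pr"
    and "(q, p) \<in> cotangent_bundle Q Pr"
  shows "(\<forall>h. emap Q Pr q p h \<in> TTstar Q Pr q p \<and>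
            (\<forall>\<xi>\<in>TTstar Q Pr q p.
               fst h \<bullet> fst \<xi> + snd h \<bullet> snd \<xi>
                 = fst (emap Q Pr q p h) \<bullet> snd \<xi> - snd (emap Q Pr q p h) \<bullet> fst \<xi>
             \<and> fst (emap Q Pr q p h) \<bullet> snd \<xi> - snd (emap Q Pr q p h) \<bullet> fst \<xi>
                 = Omega (emap Q Pr q p h) \<xi>))
   \<and> bij_betw (emap Q Pr q p) (TstarTstar Pr q) (TTstar Q Pr q p)
   \<and> (\<forall>e\<in>TTstar Q Pr q p. (- transp (Pr q) (snd e), fst e) \<in> TstarTstar Pr q
         \<and> emap Q Pr q p (- transp (Pr q) (snd e), fst e) = e)
   \<and> (\<forall>h\<in>TstarTstar Pr q. (- transp (Pr q) (snd (emap Q Pr q p h)), fst (emap Q Pr q p h)) = h)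
   \<and> (\<forall>v\<in>TTstar Q Pr q p. (\<forall>w\<in>TTstar Q Pr q p. Omega v w = 0) \<longrightarrow> v = 0)
   \<and> (\<forall>h. \<forall>v\<in>TTstar Q Pr q p.
         (\<forall>\<xi>\<in>TTstar Q Pr q p. fst h \<bullet> fst \<xi> + snd h \<bullet> snd \<xi> = Omega v \<xi>)
           \<longrightarrow> v = emap Q Pr q p h)
   \<and> (\<forall>(H :: 'a \<times> 'a \<Rightarrow> real) W (X :: 'a \<times> 'a \<Rightarrow> 'a \<times> 'a).
         open W \<and> cotangent_bundle Q Pr \<subseteq> W \<and> smooth_on W H \<and>
         (\<forall>(q', p')\<in>cotangent_bundle Q Pr. X (q', p') \<in> TTstar Q Pr q' p')
         \<longrightarrow>
         ((\<forall>Y. (\<forall>(q', p')\<in>cotangent_bundle Q Pr. Y (q', p') \<in> TTstar Q Pr q' p') \<longrightarrow>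
               (\<forall>z\<in>cotangent_bundle Q Pr. Omega (X z) (Y z) = frechet_derivative H (at z) (Y z)))
          \<longleftrightarrow>
          (\<forall>(q', p')\<in>cotangent_bundle Q Pr.
              X (q', p') = (Pr q' (grad_p H (q', p')),
                 transp (dPi Pr q' (Pr q' (grad_p H (q', p')))) p'
                 - transp (Pr q') (grad_q H (q', p') + raise Q Pr q' p' (grad_p H (q', p')))))))"
proof -
  have pt0: "pt Q Pr q p" using pt_of assms(2,3) .
  have c1: "\<forall>h. emap Q Pr q p h \<in> TTstar Q Pr q p \<and>
            (\<forall>\<xi>\<in>TTstar Q Pr q p.
               fst h \<bullet> fst \<xi> + snd h \<bullet> snd \<xi>
                 = fst (emap Q Pr q p h) \<bullet> snd \<xi> - snd (emap Q Pr q p h) \<bullet> fst \<xi>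
             \<and> fst (emap Q Pr q p h) \<bullet> snd \<xi> - snd (emap Q Pr q p h) \<bullet> fst \<xi>
                 = Omega (emap Q Pr q p h) \<xi>)"
    using pt.emap_in[OF pt0] pt.emap_ident[OF pt0] by (simp add: Omega_def)
  have c3: "\<forall>e\<in>TTstar Q Pr q p. (- transp (Pr q) (snd e), fst e) \<in> TstarTstar Pr q
         \<and> emap Q Pr q p (- transp (Pr q) (snd e), fst e) = e"
    using pt.inv_in[OF pt0] by blast
  have c4: "\<forall>h\<in>TstarTstar Pr q. (- transp (Pr q) (snd (emap Q Pr q p h)), fst (emap Q Pr q p h)) = h"
    using pt.inv_left[OF pt0] by blast
  have c2: "bij_betw (emap Q Pr q p) (TstarTstar Pr q) (TTstar Q Pr q p)"
    by (rule bij_betw_byWitness[where f'="\<lambda>e. (- transp (Pr q) (snd e), fst e)"])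
       (use c3 c4 pt.emap_in[OF pt0] in auto)
  have c5: "\<forall>v\<in>TTstar Q Pr q p. (\<forall>w\<in>TTstar Q Pr q p. Omega v w = 0) \<longrightarrow> v = 0"
    using pt.nondeg[OF pt0] by blast
  have c6: "\<forall>h. \<forall>v\<in>TTstar Q Pr q p.
         (\<forall>\<xi>\<in>TTstar Q Pr q p. fst h \<bullet> fst \<xi> + snd h \<bullet> snd \<xi> = Omega v \<xi>)
           \<longrightarrow> v = emap Q Pr q p h"
    using pt.uniq[OF pt0] by blast
  have c7: "\<forall>(H :: 'a \<times> 'a \<Rightarrow> real) W (X :: 'a \<times> 'a \<Rightarrow> 'a \<times> 'a).
         open W \<and> cotangent_bundle Q Pr \<subseteq> W \<and> smooth_on W H \<and>
         (\<forall>(q', p')\<in>cotangent_bundle Q Pr. X (q', p') \<in> TTstar Q Pr q' p')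
         \<longrightarrow>
         ((\<forall>Y. (\<forall>(q', p')\<in>cotangent_bundle Q Pr. Y (q', p') \<in> TTstar Q Pr q' p') \<longrightarrow>
               (\<forall>z\<in>cotangent_bundle Q Pr. Omega (X z) (Y z) = frechet_derivative H (at z) (Y z)))
          \<longleftrightarrow>
          (\<forall>(q', p')\<in>cotangent_bundle Q Pr.
              X (q', p') = (Pr q' (grad_p H (q', p')),
                 transp (dPi Pr q' (Pr q' (grad_p H (q', p')))) p'
                 - transp (Pr q') (grad_q H (q', p') + raise Q Pr q' p' (grad_p H (q', p'))))))"
  proof (intro allI impI)
    fix H :: "'a \<times> 'a \<Rightarrow> real" and W and X :: "'a \<times> 'a \<Rightarrow> 'a \<times> 'a"
    assume A: "open W \<and> cotangent_bundle Q Pr \<subseteq> W \<and> smooth_on W H \<and>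
         (\<forall>(q', p')\<in>cotangent_bundle Q Pr. X (q', p') \<in> TTstar Q Pr q' p')"
    have Hd: "H differentiable (at z)" if "z \<in> cotangent_bundle Q Pr" for z
      using smooth_diff A that by blast
    have XE: "(X (q', p') = (Pr q' (grad_p H (q', p')),
                 transp (dPi Pr q' (Pr q' (grad_p H (q', p')))) p'
                 - transp (Pr q') (grad_q H (q', p') + raise Q Pr q' p' (grad_p H (q', p')))))
           \<longleftrightarrow> X (q', p') = emap Q Pr q' p' (grad_q H (q', p'), grad_p H (q', p'))" for q' p'
      by (simp add: emap_def Let_def)
    show "(\<forall>Y. (\<forall>(q', p')\<in>cotangent_bundle Q Pr. Y (q', p') \<in> TTstar Q Pr q' p') \<longrightarrow>
               (\<forall>z\<in>cotangent_bundle Q Pr. Omega (X z) (Y z) = frechet_derivative H (at z) (Y z)))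
          \<longleftrightarrow>
          (\<forall>(q', p')\<in>cotangent_bundle Q Pr.
              X (q', p') = (Pr q' (grad_p H (q', p')),
                 transp (dPi Pr q' (Pr q' (grad_p H (q', p')))) p'
                 - transp (Pr q') (grad_q H (q', p') + raise Q Pr q' p' (grad_p H (q', p')))))"
      unfolding XE
    proof
      assume L: "\<forall>Y. (\<forall>(q', p')\<in>cotangent_bundle Q Pr. Y (q', p') \<in> TTstar Q Pr q' p') \<longrightarrow>
               (\<forall>z\<in>cotangent_bundle Q Pr. Omega (X z) (Y z) = frechet_derivative H (at z) (Y z))"
      have "X (q', p') = emap Q Pr q' p' (grad_q H (q', p'), grad_p H (q', p'))"
        if zq: "(q', p') \<in> cotangent_bundle Q Pr" for q' p'
      proof -
        have ptz: "pt Q Pr q' p'" using pt_of assms(2) zq .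
        have Xin: "X (q', p') \<in> TTstar Q Pr q' p'" using A zq by blast
        show ?thesis
        proof (rule pt.uniq[OF ptz Xin], rule ballI)
          fix \<xi> assume \<xi>: "\<xi> \<in> TTstar Q Pr q' p'"
          define Y where "Y = (\<lambda>w. if w = (q', p') then \<xi> else X w)"
          have "\<forall>(q'', p'')\<in>cotangent_bundle Q Pr. Y (q'', p'') \<in> TTstar Q Pr q'' p''"
            using A \<xi> unfolding Y_def by auto
          then have "Omega (X (q', p')) (Y (q', p')) = frechet_derivative H (at (q', p')) (Y (q', p'))"
            using L zq by blast
          then show "fst (grad_q H (q', p'), grad_p H (q', p')) \<bullet> fst \<xi>
                   + snd (grad_q H (q', p'), grad_p H (q', p')) \<bullet> snd \<xi> = Omega (X (q', p')) \<xi>"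
            using DH_split[OF Hd[OF zq]] by (simp add: Y_def)
        qed
      qed
      then show "\<forall>(q', p')\<in>cotangent_bundle Q Pr.
          X (q', p') = emap Q Pr q' p' (grad_q H (q', p'), grad_p H (q', p'))" by blast
    next
      assume R: "\<forall>(q', p')\<in>cotangent_bundle Q Pr.
          X (q', p') = emap Q Pr q' p' (grad_q H (q', p'), grad_p H (q', p'))"
      show "\<forall>Y. (\<forall>(q', p')\<in>cotangent_bundle Q Pr. Y (q', p') \<in> TTstar Q Pr q' p') \<longrightarrow>
               (\<forall>z\<in>cotangent_bundle Q Pr. Omega (X z) (Y z) = frechet_derivative H (at z) (Y z))"
      proof (intro allI impI ballI)
        fix Y z
        assume Yin: "\<forall>(q', p')\<in>cotangent_bundle Q Pr. Y (q', p') \<in> TTstar Q Pr q' p'"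
          and zq: "z \<in> cotangent_bundle Q Pr"
        obtain q' p' where zz: "z = (q', p')" by (cases z)
        have ptz: "pt Q Pr q' p'" using pt_of assms(2) zq zz by simp
        have Xz: "X z = emap Q Pr q' p' (grad_q H z, grad_p H z)" using R zq zz by auto
        have Yz: "Y z \<in> TTstar Q Pr q' p'" using Yin zq zz by auto
        show "Omega (X z) (Y z) = frechet_derivative H (at z) (Y z)"
          using pt.emap_ident[OF ptz Yz, of "(grad_q H z, grad_p H z)"] DH_split[OF Hd[OF zq]] Xz
          by (simp add: Omega_def)
      qed
    qed
  qed
  show ?thesis using c1 c2 c3 c4 c5 c6 c7 by blast
qed

end
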